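(* Let $c_0,c_1$ be convex loops with length measures $\mu_0,\mu_1$, and suppose that for some $j\in\{0,1\}$ the loop $c_j$ is degenerate with $\mu_j=r\delta_{x_j}+r\delta_{-x_j}$ ($r>0$, $x_j\in S^1$). Let $i$ be the other index. Then $\mu_0,\mu_1$ are weakly admissible if and only if $\mu_i(\{\pm\,\mathrm{i}x_j\})=0$.
   Context: $S^1$ is the unit circle in $\mathbb{C}$ (identified with $\mathbb{R}/2\pi\mathbb{Z}$, arc-length measure $\mathrm{d}s$, geodesic distance $\operatorname{dist}$ with values in $[0,\pi]$). A convex loop is $c\in W^{1,1}(S^1,\mathbb{C})$ with $c'\neq0$ a.e. whose image is the boundary of a convex set in $\mathbb{C}$, positively oriented; its length measure is $\mu_c:=(T_c)_\#(|c'|\,\mathrm{d}s)$, $T_c=c'/|c'|$. Degenerate means $\mu_c=r\delta_x+r\delta_{-x}$ for some $r>0$, $x\in S^1$. Two measures $\mu_0,\mu_1\in\mathcal{M}_+(S^1)$ are weakly admissible if $\mu_i(\{x\in S^1:\operatorname{dist}(x,\operatorname{supp}\mu_j)\ge\pi/2\})=0$ for $\{i,j\}=\{0,1\}$. *)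

theory Defs
  imports "HOL-Analysis.Analysis" "HOL-Complex_Analysis.Winding_Numbers"
begin

text \<open>The circle S^1 is represented as the unit circle  sphere 0 1  in the complex plane.
  A loop on S^1 = R/2piZ is a 2pi-periodic function  c :: real => complex.
  W^{1,1} regularity is expressed by an integrable function  d  (the a.e. derivative c')
  with  c t = c 0 + integral {0..t} d.\<close>

definition sdist :: "complex \<Rightarrow> complex \<Rightarrow> real" where
  "sdist x y = arccos (Re (cnj x * y))"

definition convex_loop :: "(real \<Rightarrow> complex) \<Rightarrow> (real \<Rightarrow> complex) \<Rightarrow> bool" where
  "convex_loop c d \<longleftrightarrow>
     (\<forall>t. c (t + 2 * pi) = c t) \<and>
     d absolutely_integrable_on {0..2 * pi} \<and>
     (\<forall>t\<in>{0..2 * pi}. c t = c 0 + integral {0..t} d) \<and>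
     {s \<in> {0..2 * pi}. d s = 0} \<in> null_sets lebesgue \<and>
     (\<exists>K. convex K \<and> frontier K = c ` {0..2 * pi} \<and>
        (\<forall>z\<in>interior K. winding_number (\<lambda>t. c (2 * pi * t)) z = 1))"

text \<open>Length measure  mu_c = (T_c)_# (|c'| ds),  T_c = c'/|c'|, as a Borel measure on the plane
  (concentrated on the unit circle).\<close>
definition length_measure :: "(real \<Rightarrow> complex) \<Rightarrow> complex measure" where
  "length_measure d =
     distr (density (lebesgue_on {0..2 * pi}) (\<lambda>s. ennreal (norm (d s)))) borel
           (\<lambda>s. d s / complex_of_real (norm (d s)))"

definition supp_S1 :: "complex measure \<Rightarrow> complex set" where
  "supp_S1 \<mu> = {x \<in> sphere 0 1. \<forall>e>0. emeasure \<mu> (ball x e \<inter> sphere 0 1) > 0}"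

definition weakly_admissible :: "complex measure \<Rightarrow> complex measure \<Rightarrow> bool" where
  "weakly_admissible \<mu>0 \<mu>1 \<longleftrightarrow>
     emeasure \<mu>0 {x \<in> sphere 0 1. (INF y\<in>supp_S1 \<mu>1. sdist x y) \<ge> pi / 2} = 0 \<and>
     emeasure \<mu>1 {x \<in> sphere 0 1. (INF y\<in>supp_S1 \<mu>0. sdist x y) \<ge> pi / 2} = 0"

definition degenerate_with :: "complex measure \<Rightarrow> real \<Rightarrow> complex \<Rightarrow> bool" where
  "degenerate_with \<mu> r x \<longleftrightarrow>
     (\<forall>A \<in> sets (borel :: complex measure). A \<subseteq> sphere 0 1 \<longrightarrow>
        emeasure \<mu> A = ennreal r * indicator A x + ennreal r * indicator A (- x))"

end

theory Submission
  imports Defs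
begin

lemma sphere_perp:
  fixes x z :: complex
  assumes "x \<in> sphere 0 1" "z \<in> sphere 0 1"
  shows "Re (cnj z * x) = 0 \<longleftrightarrow> z = \<i> * x \<or> z = - (\<i> * x)"
proof
  assume h: "Re (cnj z * x) = 0"
  define w where "w = cnj z * x"
  have nw: "cmod w = 1" using assms by (simp add: w_def norm_mult)
  have "(Re w)^2 + (Im w)^2 = 1" using nw by (metis cmod_power2 one_power2)
  then have "(Im w)^2 = 1" using h by (simp add: w_def)
  then have "Im w = 1 \<or> Im w = -1" by (metis abs_numeral power2_eq_1_iff)
  then have wi: "w = \<i> \<or> w = -\<i>" using h by (auto simp: w_def complex_eq_iff)
  have zz: "z * cnj z = 1" using assms(2) by (metis complex_norm_square mem_sphere_0 of_real_1 one_power2)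
  have xx: "x * cnj x = 1" using assms(1) by (metis complex_norm_square mem_sphere_0 of_real_1 one_power2)
  have "x * cnj w = z" unfolding w_def using xx by (simp add: algebra_simps)
  then show "z = \<i> * x \<or> z = - (\<i> * x)" using wi by (auto simp: algebra_simps)
next
  assume "z = \<i> * x \<or> z = - (\<i> * x)"
  then show "Re (cnj z * x) = 0" by auto
qed

lemma arccos_ge_half_iff:
  assumes "-1 \<le> t" "t \<le> 1"
  shows "pi / 2 \<le> arccos t \<longleftrightarrow> t \<le> 0"
  proof
  assume "pi / 2 \<le> arccos t"
  then show "t \<le> 0" using arccos_less_arccos[of 0 t] assms by (force simp: arccos_0)
next
  assume "t \<le> 0"
  then show "pi / 2 \<le> arccos t" using arccos_le_arccos[of t 0] assms by (auto simp: arccos_0)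
qed

lemma far_set:
  assumes "x \<in> sphere (0::complex) 1"
  shows "{z \<in> sphere 0 1. (INF y\<in>{x, -x}. sdist z y) \<ge> pi / 2} = {\<i> * x, - (\<i> * x)}"
proof -
  have "z \<in> sphere 0 1 \<and> (INF y\<in>{x, -x}. sdist z y) \<ge> pi / 2 \<longleftrightarrow> z = \<i> * x \<or> z = - (\<i> * x)" for z
  proof (cases "z \<in> sphere 0 1")
    case True
    have b: "\<bar>Re (cnj z * x)\<bar> \<le> 1"
      using abs_Re_le_cmod[of "cnj z * x"] True assms by (simp add: norm_mult)
    have "(INF y\<in>{x, -x}. sdist z y) = min (sdist z x) (sdist z (-x))"
      by (simp add: cInf_eq_Min)
    then have "(INF y\<in>{x, -x}. sdist z y) \<ge> pi / 2 \<longleftrightarrow> Re (cnj z * x) = 0"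
      using arccos_ge_half_iff[of "Re (cnj z * x)"] arccos_ge_half_iff[of "- Re (cnj z * x)"] b
      by (auto simp: sdist_def)
    then show ?thesis using sphere_perp[OF assms True] True by simp
  next
    case False
    then show ?thesis using assms by (auto simp: norm_mult)
  qed
  then show ?thesis by auto
qed


lemma sets_lm[simp]: "sets (length_measure d) = sets borel"
  by (simp add: length_measure_def)

lemma supp_degenerate:
  assumes "degenerate_with \<mu> r x" "r > 0" "x \<in> sphere 0 1" "sets \<mu> = sets borel"
  shows "supp_S1 \<mu> = {x, -x}"
proof -
  have x0: "x \<noteq> 0" using assms(3) by auto
  have mx: "-x \<in> sphere 0 1" using assms(3) by simp
  have em: "emeasure \<mu> (ball y e \<inter> sphere 0 1) = ennreal r * indicator (ball y e \<inter> sphere 0 1) x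
      + ennreal r * indicator (ball y e \<inter> sphere 0 1) (-x)" for y e
    using assms(1) unfolding degenerate_with_def by auto
  have "y \<in> supp_S1 \<mu> \<longleftrightarrow> y = x \<or> y = -x" for y
  proof
    assume y: "y \<in> supp_S1 \<mu>"
    show "y = x \<or> y = -x"
    proof (rule ccontr)
      assume n: "\<not> (y = x \<or> y = -x)"
      define e where "e = min (dist y x) (dist y (-x))"
      have "e > 0" using n by (simp add: e_def)
      then have "emeasure \<mu> (ball y e \<inter> sphere 0 1) > 0" using y by (auto simp: supp_S1_def)
      moreover have "x \<notin> ball y e" "-x \<notin> ball y e" by (auto simp: e_def)
      ultimately show False using em[of y e] by simp
    qed
  next
    assume y: "y = x \<or> y = -x"
    have "y \<in> sphere 0 1" using y assms(3) by auto
    moreover have "emeasure \<mu> (ball y e \<inter> sphere 0 1) > 0" if "e > 0" for e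
    proof -
      have "y \<in> ball y e \<inter> sphere 0 1" using that \<open>y \<in> sphere 0 1\<close> by auto
      then have "ennreal r \<le> emeasure \<mu> (ball y e \<inter> sphere 0 1)"
        using em[of y e] y by (auto simp: indicator_def)
      then show ?thesis using assms(2) by (metis ennreal_eq_0_iff not_gr_zero order.not_eq_order_implies_strict order_less_le_trans not_le)
    qed
    ultimately show "y \<in> supp_S1 \<mu>" by (auto simp: supp_S1_def)
  qed
  then show ?thesis by auto
qed

lemma compact_null:
  assumes "sets \<mu> = sets borel" "compact K" "K \<inter> supp_S1 \<mu> = {}" "K \<subseteq> sphere 0 1"
  shows "emeasure \<mu> K = 0"
proof -
  have "\<forall>y\<in>K. \<exists>e>0. emeasure \<mu> (ball y e \<inter> sphere 0 1) = 0"
  proof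
    fix y assume y: "y \<in> K"
    then have "y \<notin> supp_S1 \<mu>" "y \<in> sphere 0 1" using assms(3,4) by auto
    then obtain e where "e > 0" "\<not> emeasure \<mu> (ball y e \<inter> sphere 0 1) > 0"
      unfolding supp_S1_def by auto
    then show "\<exists>e>0. emeasure \<mu> (ball y e \<inter> sphere 0 1) = 0" by (auto simp: not_gr_zero)
  qed
  then obtain e where e: "\<And>y. y \<in> K \<Longrightarrow> e y > 0 \<and> emeasure \<mu> (ball y (e y) \<inter> sphere 0 1) = 0"
    by (metis (no_types))
  have "K \<subseteq> (\<Union>y\<in>K. ball y (e y))" using e by force
  then obtain F where F: "F \<subseteq> K" "finite F" "K \<subseteq> (\<Union>y\<in>F. ball y (e y))"
    using compactE_image[OF assms(2), of K "\<lambda>y. ball y (e y)"] by auto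
  have KF: "K \<subseteq> (\<Union>y\<in>F. ball y (e y) \<inter> sphere 0 1)" using F(3) assms(4) by auto
  have sb: "ball y (e y) \<inter> sphere 0 1 \<in> sets \<mu>" for y
    using assms(1) by auto
  have "(\<Union>y\<in>F. ball y (e y) \<inter> sphere 0 1) \<in> null_sets \<mu>"
    using F e sb by (intro null_sets.finite_UN) (auto simp: null_sets_def)
  moreover have "K \<in> sets \<mu>" using assms(1,2) by (simp add: compact_imp_closed)
  ultimately have "K \<in> null_sets \<mu>" using KF null_sets_subset by blast
  then show ?thesis by auto
qed

lemma lm_emeasure:
  assumes dm: "d \<in> borel_measurable (lebesgue_on {0..2*pi})" and A: "A \<in> sets borel"
  shows "emeasure (length_measure d) A =
    (\<integral>\<^sup>+ s. ennreal (norm (d s)) * indicator A (d s / complex_of_real (norm (d s))) \<partial>lebesgue_on {0..2*pi})"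
proof -
  let ?M = "lebesgue_on {0..2*pi}"
  let ?u = "\<lambda>s. d s / complex_of_real (norm (d s))"
  have nm: "(\<lambda>s. complex_of_real (norm (d s))) \<in> borel_measurable ?M"
    using measurable_compose[OF measurable_compose[OF dm borel_measurable_norm] borel_measurable_of_real] by simp
  have um: "?u \<in> borel_measurable ?M" using borel_measurable_divide[OF dm nm] .
  have nnm: "(\<lambda>s. ennreal (norm (d s))) \<in> borel_measurable ?M"
    using measurable_compose[OF measurable_compose[OF dm borel_measurable_norm] measurable_ennreal] by simp
  have eqm: "measurable (density ?M (\<lambda>s. ennreal (norm (d s)))) (borel :: complex measure) = measurable ?M borel"
    by (rule measurable_cong_sets) auto
  have um': "?u \<in> measurable (density ?M (\<lambda>s. ennreal (norm (d s)))) borel"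
    using um unfolding eqm .
  have "emeasure (length_measure d) A = emeasure (density ?M (\<lambda>s. ennreal (norm (d s)))) (?u -` A \<inter> space ?M)"
    unfolding length_measure_def using emeasure_distr[OF um' A] by simp
  also have "\<dots> = (\<integral>\<^sup>+ s. ennreal (norm (d s)) * indicator (?u -` A \<inter> space ?M) s \<partial>?M)"
    by (rule emeasure_density[OF nnm measurable_sets[OF um A]])
  also have "\<dots> = (\<integral>\<^sup>+ s. ennreal (norm (d s)) * indicator A (?u s) \<partial>?M)"
    by (intro nn_integral_cong) (auto simp: indicator_def)
  finally show ?thesis .
qed

lemma lm_null_AE:
  assumes dm: "d \<in> borel_measurable (lebesgue_on {0..2*pi})" and A: "A \<in> sets borel"
    and z: "emeasure (length_measure d) A = 0"
  shows "AE s in lebesgue_on {0..2*pi}. d s / complex_of_real (norm (d s)) \<in> A \<longrightarrow> d s = 0"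
proof -
  let ?M = "lebesgue_on {0..2*pi}"
  let ?u = "\<lambda>s. d s / complex_of_real (norm (d s))"
  have nm: "(\<lambda>s. complex_of_real (norm (d s))) \<in> borel_measurable ?M"
    using measurable_compose[OF measurable_compose[OF dm borel_measurable_norm] borel_measurable_of_real] by simp
  have um: "?u \<in> borel_measurable ?M" using borel_measurable_divide[OF dm nm] .
  have "(\<lambda>s. ennreal (norm (d s)) * indicator A (?u s)) \<in> borel_measurable ?M"
  proof -
    have "(\<lambda>s. ennreal (norm (d s))) \<in> borel_measurable ?M"
      using measurable_compose[OF measurable_compose[OF dm borel_measurable_norm] measurable_ennreal] by simp
    moreover have "(\<lambda>s. indicator A (?u s) :: ennreal) \<in> borel_measurable ?M"
      using measurable_compose[OF um borel_measurable_indicator[OF A]] by simp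
    ultimately show ?thesis by (rule borel_measurable_times_ennreal)
  qed
  then have "AE s in ?M. ennreal (norm (d s)) * indicator A (?u s) = 0"
    using z lm_emeasure[OF dm A] nn_integral_0_iff_AE[of _ ?M] by simp
  then show ?thesis by eventually_elim (auto simp: indicator_def)
qed


lemma key_lemma:
  fixes d :: "real \<Rightarrow> complex" and x :: complex
  assumes ai: "d absolutely_integrable_on {0..2*pi}"
    and i0: "integral {0..2*pi} d = 0"
    and nz: "{s \<in> {0..2*pi}. d s = 0} \<in> null_sets lebesgue"
    and x: "x \<in> sphere 0 1"
    and m0: "emeasure (length_measure d) {\<i> * x, - (\<i> * x)} = 0"
  shows "\<exists>y \<in> supp_S1 (length_measure d). Re (cnj x * y) > 0"
proof (rule ccontr)
  assume H: "\<not> (\<exists>y \<in> supp_S1 (length_measure d). Re (cnj x * y) > 0)"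
  define S where "S = {0..2*pi::real}"
  define M where "M = lebesgue_on S"
  define u where "u = (\<lambda>s. d s / complex_of_real (norm (d s)))"
  let ?\<mu> = "length_measure d"
  have Sl: "S \<in> sets lebesgue" by (simp add: S_def)
  have dint: "integrable M d" unfolding M_def using absolutely_integrable_imp_integrable[OF ai] S_def by simp
  have dm: "d \<in> borel_measurable (lebesgue_on {0..2*pi})" using dint unfolding M_def S_def by auto
  define K where "K = (\<lambda>n::nat. {y \<in> sphere 0 1. Re (cnj x * y) \<ge> 1 / Suc n})"
  have Kc: "compact (K n)" for n
  proof -
    have "closed {y::complex. Re (cnj x * y) \<ge> 1 / Suc n}"
      by (intro closed_Collect_le continuous_intros)
    moreover have "K n = sphere 0 1 \<inter> {y::complex. Re (cnj x * y) \<ge> 1 / Suc n}"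
      unfolding K_def by auto
    ultimately have "closed (K n)" by (metis closed_Int closed_sphere)
    moreover have "bounded (K n)" unfolding K_def by (rule bounded_subset[OF bounded_sphere[of 0 1]]) auto
    ultimately show ?thesis by (simp add: compact_eq_bounded_closed)
  qed
  have K0: "emeasure ?\<mu> (K n) = 0" for n
  proof (rule compact_null[OF sets_lm Kc])
    show "K n \<inter> supp_S1 ?\<mu> = {}" using H unfolding K_def
      by (auto simp del: of_nat_Suc) (smt (verit) of_nat_0_le_iff divide_pos_pos of_nat_Suc)
    show "K n \<subseteq> sphere 0 1" unfolding K_def by auto
  qed
  have KU: "(\<Union>n. K n) = {y \<in> sphere 0 1. Re (cnj x * y) > 0}"
  proof
    show "(\<Union>n. K n) \<subseteq> {y \<in> sphere 0 1. Re (cnj x * y) > 0}" unfolding K_def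
      by (auto simp del: of_nat_Suc) (smt (verit) of_nat_0_le_iff divide_pos_pos of_nat_Suc)
    show "{y \<in> sphere 0 1. Re (cnj x * y) > 0} \<subseteq> (\<Union>n. K n)"
    proof
      fix y assume y: "y \<in> {y \<in> sphere 0 1. Re (cnj x * y) > 0}"
      then obtain n where "1 / Suc n < Re (cnj x * y)"
        using reals_Archimedean[of "Re (cnj x * y)"] by (auto simp: inverse_eq_divide)
      then have "y \<in> K n" using y unfolding K_def by (simp del: of_nat_Suc)
      then show "y \<in> (\<Union>n. K n)" by blast
    qed
  qed
  define U where "U = {y \<in> sphere 0 1. Re (cnj x * y) > 0}"
  have Ksets: "range K \<subseteq> sets borel" using Kc by (auto intro: borel_closed compact_imp_closed)
  have U0: "emeasure ?\<mu> U = 0" unfolding U_def KU[symmetric]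
    by (rule emeasure_UN_eq_0) (use K0 Ksets in auto)
  have Ub: "U \<in> sets borel" unfolding U_def KU[symmetric] using Ksets by auto
  have AE1: "AE s in M. u s \<in> U \<longrightarrow> d s = 0"
    using lm_null_AE[OF dm Ub U0] unfolding M_def S_def u_def .
  have AE2: "AE s in M. u s \<in> {\<i> * x, - (\<i> * x)} \<longrightarrow> d s = 0"
    using lm_null_AE[OF dm _ m0] unfolding M_def S_def u_def by auto
  have usph: "d s \<noteq> 0 \<Longrightarrow> u s \<in> sphere 0 1" for s
    by (simp add: u_def norm_divide)
  have Reu: "Re (cnj x * d s) = norm (d s) * Re (cnj x * u s)" if "d s \<noteq> 0" for s
    using that by (simp add: u_def Re_divide_of_real)
  have AE3: "AE s in M. Re (cnj x * d s) \<le> 0"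
    using AE1
  proof eventually_elim
    case (elim s)
    show ?case
    proof (rule ccontr)
      assume "\<not> Re (cnj x * d s) \<le> 0"
      then have p: "Re (cnj x * d s) > 0" by simp
      then have "d s \<noteq> 0" by auto
      then have "Re (cnj x * u s) > 0" using p Reu[of s] by (simp add: zero_less_mult_iff)
      then have "u s \<in> U" using usph \<open>d s \<noteq> 0\<close> by (simp add: U_def)
      then show False using elim \<open>d s \<noteq> 0\<close> by simp
    qed
  qed
  define g where "g = (\<lambda>s. - Re (cnj x * d s))"
  have "has_bochner_integral M d (integral\<^sup>L M d)" using dint by (rule has_bochner_integral_integrable)
  then have "has_bochner_integral M (\<lambda>s. cnj x * d s) (cnj x * integral\<^sup>L M d)"
    by (rule has_bochner_integral_mult_right)
  then have "has_bochner_integral M (\<lambda>s. Re (cnj x * d s)) (Re (cnj x * integral\<^sup>L M d))"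
    by (rule has_bochner_integral_Re)
  then have hg: "has_bochner_integral M g (- Re (cnj x * integral\<^sup>L M d))"
    unfolding g_def by (rule has_bochner_integral_minus)
  have "integral\<^sup>L M d = integral S d"
    unfolding M_def by (rule lebesgue_integral_eq_integral[OF _ Sl]) (use dint M_def in simp)
  then have "integral\<^sup>L M d = 0" using i0 S_def by simp
  then have hg0: "has_bochner_integral M g 0" using hg by simp
  have gi: "integrable M g" "integral\<^sup>L M g = 0"
    using has_bochner_integral_iff hg0 by blast+
  have "AE s in M. 0 \<le> g s" using AE3 by eventually_elim (simp add: g_def)
  then have "AE s in M. g s = 0"
    using integral_nonneg_eq_0_iff_AE[OF gi(1)] gi(2) by blast
  then have AE4: "AE s in M. d s = 0"
    using AE2
  proof eventually_elim
    case (elim s)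
    show ?case
    proof (rule ccontr)
      assume dn: "d s \<noteq> 0"
      have e0: "Re (cnj x * d s) = 0" using elim(1) unfolding g_def by linarith
      have "norm (d s) * Re (cnj x * u s) = 0" using e0 Reu[OF dn] by linarith
      then have "Re (cnj x * u s) = 0" using dn by simp
      then have "Re (cnj (u s) * x) = 0" by (simp add: algebra_simps)
      then have "u s \<in> {\<i> * x, - (\<i> * x)}" using sphere_perp[OF x usph[OF dn]] by auto
      then show False using elim(2) dn by simp
    qed
  qed
  have "AE s in lebesgue. s \<in> S \<longrightarrow> d s = 0"
    using AE4 unfolding M_def by (subst (asm) AE_restrict_space_iff) (use Sl in auto)
  moreover have "AE s in lebesgue. s \<notin> {s \<in> S. d s = 0}"
    using AE_not_in[OF nz] unfolding S_def .
  ultimately have "AE s in lebesgue. s \<notin> S" by eventually_elim auto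
  then have "S \<in> null_sets lebesgue" using AE_iff_null_sets[OF Sl] by simp
  moreover have "emeasure lebesgue S = ennreal (2*pi)" unfolding S_def by simp
  ultimately show False by (simp add: null_sets_def)
qed


lemma loop_facts:
  assumes "convex_loop c d"
  shows "d absolutely_integrable_on {0..2*pi}" "integral {0..2*pi} d = 0"
    "{s \<in> {0..2*pi}. d s = 0} \<in> null_sets lebesgue"
proof -
  have L: "(\<forall>t. c (t + 2 * pi) = c t) \<and> d absolutely_integrable_on {0..2 * pi} \<and>
     (\<forall>t\<in>{0..2 * pi}. c t = c 0 + integral {0..t} d) \<and>
     {s \<in> {0..2 * pi}. d s = 0} \<in> null_sets lebesgue"
    using assms unfolding convex_loop_def by blast
  have p: "c (0 + 2*pi) = c 0" using L by blast
  have "(2*pi::real) \<in> {0..2*pi}" by simp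
  then have e: "c (2*pi) = c 0 + integral {0..2*pi} d" using L by blast
  show "integral {0..2*pi} d = 0" using p e by simp
  show "d absolutely_integrable_on {0..2*pi}" "{s \<in> {0..2*pi}. d s = 0} \<in> null_sets lebesgue"
    using L by blast+
qed

lemma far_zero:
  assumes cl: "convex_loop c d" and x: "x \<in> sphere 0 1" and r: "r > 0"
    and dg: "degenerate_with \<mu> r x" and sm: "sets \<mu> = sets borel"
    and m0: "emeasure (length_measure d) {\<i> * x, - (\<i> * x)} = 0"
  shows "emeasure \<mu> {z \<in> sphere 0 1. (INF y\<in>supp_S1 (length_measure d). sdist z y) \<ge> pi / 2} = 0"
proof -
  let ?S = "supp_S1 (length_measure d)"
  define A where "A = {z \<in> sphere 0 1. (INF y\<in>?S. sdist z y) \<ge> pi / 2}"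
  have notin: "z \<notin> A" if z: "z \<in> sphere 0 1" and m: "emeasure (length_measure d) {\<i> * z, - (\<i> * z)} = 0" for z
  proof -
    obtain y where y: "y \<in> ?S" "Re (cnj z * y) > 0"
      using key_lemma[OF loop_facts[OF cl] z m] by blast
    have bdd: "bdd_below ((\<lambda>y. sdist z y) ` ?S)"
    proof (rule bdd_belowI[of _ 0])
      fix t assume "t \<in> (\<lambda>y. sdist z y) ` ?S"
      then obtain w where w: "w \<in> ?S" "t = sdist z w" by auto
      have "w \<in> sphere 0 1" using w(1) by (auto simp: supp_S1_def)
      then have "\<bar>Re (cnj z * w)\<bar> \<le> 1"
        using abs_Re_le_cmod[of "cnj z * w"] z by (simp add: norm_mult)
      then show "0 \<le> t" using w(2) arccos_lbound[of "Re (cnj z * w)"] by (simp add: sdist_def)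
    qed
    have ysph: "y \<in> sphere 0 1" using y(1) by (auto simp: supp_S1_def)
    have b: "Re (cnj z * y) \<le> 1"
      using complex_Re_le_cmod[of "cnj z * y"] z ysph by (simp add: norm_mult)
    have "sdist z y < pi / 2"
      using arccos_ge_half_iff[of "Re (cnj z * y)"] y(2) b by (auto simp: sdist_def)
    moreover have "(INF y\<in>?S. sdist z y) \<le> sdist z y" by (rule cINF_lower[OF bdd y(1)])
    ultimately show ?thesis unfolding A_def by auto
  qed
  have "x \<notin> A" using notin[OF x m0] .
  moreover have "-x \<notin> A" using notin[of "-x"] x m0 by (simp add: insert_commute)
  ultimately show ?thesis
  proof (cases "A \<in> sets borel")
    case True
    have "A \<subseteq> sphere 0 1" unfolding A_def by blast
    then have "emeasure \<mu> A = ennreal r * indicator A x + ennreal r * indicator A (-x)"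
      using dg True unfolding degenerate_with_def by blast
    then show ?thesis using \<open>x \<notin> A\<close> \<open>-x \<notin> A\<close> unfolding A_def[symmetric] by simp
  next
    case False
    then have "A \<notin> sets \<mu>" using sm by simp
    then show ?thesis unfolding A_def[symmetric] by (rule emeasure_notin_sets)
  qed
qed

theorem corollary3p3:
  fixes c d :: "nat \<Rightarrow> real \<Rightarrow> complex" and j :: nat and r :: real and x :: complex
  assumes "convex_loop (c 0) (d 0)" and "convex_loop (c 1) (d 1)"
    and "j \<in> {0, 1}"
    and "r > 0" and "x \<in> sphere 0 1"
    and "degenerate_with (length_measure (d j)) r x"
  shows "weakly_admissible (length_measure (d 0)) (length_measure (d 1)) \<longleftrightarrow>
         emeasure (length_measure (d (1 - j))) {\<i> * x, - (\<i> * x)} = 0"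
proof -
  let ?i = "1 - j"
  have cli: "convex_loop (c ?i) (d ?i)" using assms(1,2,3) by auto
  have Sj: "supp_S1 (length_measure (d j)) = {x, -x}"
    using supp_degenerate[OF assms(6,4,5)] by simp
  have Ci: "emeasure (length_measure (d ?i)) {z \<in> sphere 0 1. (INF y\<in>supp_S1 (length_measure (d j)). sdist z y) \<ge> pi / 2}
      = emeasure (length_measure (d ?i)) {\<i> * x, - (\<i> * x)}"
    unfolding Sj far_set[OF assms(5)] ..
  have Cj: "emeasure (length_measure (d ?i)) {\<i> * x, - (\<i> * x)} = 0 \<Longrightarrow>
      emeasure (length_measure (d j)) {z \<in> sphere 0 1. (INF y\<in>supp_S1 (length_measure (d ?i)). sdist z y) \<ge> pi / 2} = 0"
    by (rule far_zero[OF cli assms(5,4,6)]) simp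
  have W: "weakly_admissible (length_measure (d j)) (length_measure (d ?i)) \<longleftrightarrow>
         emeasure (length_measure (d ?i)) {\<i> * x, - (\<i> * x)} = 0"
    unfolding weakly_admissible_def Ci using Cj by blast
  show ?thesis
  proof (cases "j = 0")
    case True
    then show ?thesis using W by (simp only: True diff_zero)
  next
    case False
    then have "j = 1" using assms(3) by simp
    have sym: "weakly_admissible a b \<longleftrightarrow> weakly_admissible b a" for a b
      unfolding weakly_admissible_def by blast
    show ?thesis using W sym by (simp only: \<open>j = 1\<close> diff_self_eq_0)
  qed
qed

end
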